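(* Let $n\ge1$ and let $A$ be a $2n\times 2n$ real symmetric positive definite matrix, written in block form $A=\begin{pmatrix} A_{11} & A_{12}\\ A_{12}^T & A_{22}\end{pmatrix}$ with $n\times n$ blocks. Let $\Delta_{11},\Delta_{12},\Delta_{22}\in\mathbb{R}^n$ be the vectors of diagonal entries of $A_{11},A_{12},A_{22}$ respectively, and define (all operations entrywise) $$\Delta_{\mathrm{w}}(A)\coloneqq\sqrt{\frac{\Delta_{11}^2+\Delta_{22}^2}{2}},\qquad \Delta_{\mathrm{h}}(A)\coloneqq\sqrt{\frac{\Delta_{11}^2+\Delta_{22}^2+2\Delta_{12}^2}{2}}.$$ Then the following are equivalent: (i) $\Delta_{\mathrm{w}}(A)\prec d_{\mathrm{s}}(A)$; (ii) $\Delta_{\mathrm{h}}(A)\prec d_{\mathrm{s}}(A)$; (iii) $A$ is orthosymplectically diagonalizable in the sense of Williamson's theorem.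
   Context: Let $J_{2n}=\begin{pmatrix}0 & I_n\\ -I_n & 0\end{pmatrix}$. A $2n\times 2n$ real matrix $S$ is symplectic if $S^TJ_{2n}S=J_{2n}$; $S$ is orthosymplectic if it is symplectic and orthogonal ($S^TS=I_{2n}$). Williamson's theorem: for every $2n\times 2n$ real symmetric positive definite matrix $B$ there is a symplectic $S$ with $S^TBS=\begin{pmatrix} D&0\\0&D\end{pmatrix}$, where $D$ is an $n\times n$ diagonal matrix with positive diagonal entries; these diagonal entries, which are uniquely determined up to order, are the symplectic eigenvalues of $B$, and $d_{\mathrm{s}}(B)\in\mathbb{R}^n$ denotes the vector of symplectic eigenvalues $d_1(B)\le\cdots\le d_n(B)$. $B$ is called orthosymplectically diagonalizable in the sense of Williamson's theorem if such an $S$ can be chosen orthosymplectic. For $x\in\mathbb{R}^n$ write $x^\uparrow_1\le\cdots\le x^\uparrow_n$ for its entries in increasing order. For $x,y\in\mathbb{R}^n$, $x$ is majorized by $y$, written $x\prec y$, if $\sum_{i=1}^k x^\uparrow_i\ge\sum_{i=1}^k y^\uparrow_i$ for $k=1,\dots,n$, with equality for $k=n$. *)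

theory Defs
  imports "HOL-Analysis.Analysis" "HOL-Library.Multiset"
begin

text \<open>A 2n x 2n real matrix is indexed by the type 'n + 'n, where Inl i is the
  i-th index of the first block and Inr i the i-th index of the second block;
  n = CARD('n) \<ge> 1.\<close>

type_synonym 'n dmat = "real ^ ('n + 'n) ^ ('n + 'n)"

definition J_mat :: "'n::finite dmat" where
  "J_mat = (\<chi> p q. case (p, q) of
              (Inl i, Inr j) \<Rightarrow> (if i = j then 1 else 0)
            | (Inr i, Inl j) \<Rightarrow> (if i = j then -1 else 0)
            | _ \<Rightarrow> 0)"

definition symplectic :: "'n::finite dmat \<Rightarrow> bool" where
  "symplectic S \<longleftrightarrow> transpose S ** J_mat ** S = J_mat"

definition orthosymplectic :: "'n::finite dmat \<Rightarrow> bool" where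
  "orthosymplectic S \<longleftrightarrow> symplectic S \<and> orthogonal_matrix S"

definition blockdiag :: "real ^ 'n \<Rightarrow> 'n::finite dmat" where
  "blockdiag d = (\<chi> p q. case (p, q) of
              (Inl i, Inl j) \<Rightarrow> (if i = j then d $ i else 0)
            | (Inr i, Inr j) \<Rightarrow> (if i = j then d $ i else 0)
            | _ \<Rightarrow> 0)"

definition sym_posdef :: "'n::finite dmat \<Rightarrow> bool" where
  "sym_posdef A \<longleftrightarrow> transpose A = A \<and> (\<forall>x. x \<noteq> 0 \<longrightarrow> x \<bullet> (A *v x) > 0)"

definition incr :: "real ^ 'n::finite \<Rightarrow> real list" where
  "incr x = sorted_list_of_multiset (image_mset (\<lambda>i. x $ i) (mset_set UNIV))"

definition williamson :: "'n::finite dmat \<Rightarrow> 'n dmat \<Rightarrow> real ^ 'n \<Rightarrow> bool" where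
  "williamson B S d \<longleftrightarrow> symplectic S \<and> (\<forall>i. d $ i > 0) \<and>
     transpose S ** B ** S = blockdiag d"

text \<open>d_s(B): the symplectic eigenvalues in increasing order (uniquely determined).\<close>
definition symp_eigs :: "'n::finite dmat \<Rightarrow> real list" where
  "symp_eigs B = (THE l. \<exists>S d. williamson B S d \<and> l = incr d)"

definition orthosymp_diagonalizable :: "'n::finite dmat \<Rightarrow> bool" where
  "orthosymp_diagonalizable B \<longleftrightarrow> (\<exists>S d. williamson B S d \<and> orthosymplectic S)"

definition majorized :: "real list \<Rightarrow> real list \<Rightarrow> bool" where
  "majorized xs ys \<longleftrightarrow> length xs = length ys \<and>
     (\<forall>k \<le> length xs. sum_list (take k (sort xs)) \<ge> sum_list (take k (sort ys))) \<and>
     sum_list xs = sum_list ys"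

definition Delta11 :: "'n::finite dmat \<Rightarrow> real ^ 'n" where
  "Delta11 A = (\<chi> i. A $ Inl i $ Inl i)"
definition Delta12 :: "'n::finite dmat \<Rightarrow> real ^ 'n" where
  "Delta12 A = (\<chi> i. A $ Inl i $ Inr i)"
definition Delta22 :: "'n::finite dmat \<Rightarrow> real ^ 'n" where
  "Delta22 A = (\<chi> i. A $ Inr i $ Inr i)"

definition Delta_w :: "'n::finite dmat \<Rightarrow> real ^ 'n" where
  "Delta_w A = (\<chi> i. sqrt (((Delta11 A $ i)\<^sup>2 + (Delta22 A $ i)\<^sup>2) / 2))"
definition Delta_h :: "'n::finite dmat \<Rightarrow> real ^ 'n" where
  "Delta_h A = (\<chi> i. sqrt (((Delta11 A $ i)\<^sup>2 + (Delta22 A $ i)\<^sup>2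
                              + 2 * (Delta12 A $ i)\<^sup>2) / 2))"

end

theory Submission
  imports Defs
begin

lemma sum_UNIV_plus:
  fixes f :: "'a::finite + 'b::finite \<Rightarrow> 'c::comm_monoid_add"
  shows "sum f UNIV = (\<Sum>i\<in>UNIV. f (Inl i)) + (\<Sum>i\<in>UNIV. f (Inr i))"
proof -
  have "UNIV = range Inl \<union> (range Inr :: ('a+'b) set)" by (metis UNIV_eq_I Un_iff rangeI sum.exhaust)
  then have "sum f UNIV = sum f (range Inl) + sum f (range Inr)"
    by (metis sum.union_disjoint finite Inl_Inr_False disjoint_iff rangeE finite_imageI)
  also have "\<dots> = (\<Sum>i\<in>UNIV. f (Inl i)) + (\<Sum>i\<in>UNIV. f (Inr i))"
    by (simp add: sum.reindex)
  finally show ?thesis .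
qed

lemma sum_delta_mult[simp]:
  "(\<Sum>j\<in>(UNIV::'a::finite set). (if i = j then c else 0) * (f j::real)) = c * f i"
  "(\<Sum>j\<in>(UNIV::'a::finite set). (if j = i then c else 0) * (f j::real)) = c * f i"
proof -
  have "\<And>j. (if i = j then c else 0) * f j = (if j = i then c * f j else 0)" by auto
  then show "(\<Sum>j\<in>(UNIV::'a::finite set). (if i = j then c else 0) * (f j::real)) = c * f i"
    by (simp add: sum.delta)
  have "\<And>j. (if j = i then c else 0) * f j = (if j = i then c * f j else 0)" by auto
  then show "(\<Sum>j\<in>(UNIV::'a::finite set). (if j = i then c else 0) * (f j::real)) = c * f i"
    by (simp add: sum.delta)
qed

lemma J_entry:
  "(J_mat::'n::finite dmat) $ Inl i $ Inl j = 0"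
  "(J_mat::'n::finite dmat) $ Inr i $ Inr j = 0"
  "(J_mat::'n::finite dmat) $ Inl i $ Inr j = (if i = j then 1 else 0)"
  "(J_mat::'n::finite dmat) $ Inr i $ Inl j = (if i = j then -1 else 0)"
  by (simp_all add: J_mat_def)

lemma J_mulv:
  "((J_mat::'n::finite dmat) *v x) $ Inl i = x $ Inr i"
  "((J_mat::'n::finite dmat) *v x) $ Inr i = - x $ Inl i"
  by (simp_all add: matrix_vector_mult_def sum_UNIV_plus J_entry)

lemma J_inner: "x \<bullet> ((J_mat::'n::finite dmat) *v y) = (\<Sum>i\<in>UNIV. x$Inl i * y $ Inr i - x $ Inr i * y $ Inl i)"
  apply (simp add: inner_vec_def sum_UNIV_plus J_mulv sum_subtractf)
  apply (subst sum_negf) apply simp done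

lemma J_skew: "x \<bullet> ((J_mat::'n::finite dmat) *v y) = - (y \<bullet> (J_mat *v x))"
  unfolding J_inner sum_negf[symmetric] by (rule sum.cong) (auto simp: algebra_simps)

lemma J_self: "x \<bullet> ((J_mat::'n::finite dmat) *v x) = 0"
  using J_skew[of x x] by simp

lemma JJ_v: "(J_mat::'n::finite dmat) *v (J_mat *v x) = - x"
proof -
  have "\<forall>p. ((J_mat::'n::finite dmat) *v (J_mat *v x)) $ p = (-x) $ p"
    by (intro allI, case_tac p) (simp_all add: J_mulv)
  then show ?thesis by (simp add: vec_eq_iff)
qed

lemma JJ: "(J_mat::'n::finite dmat) ** J_mat = - mat 1"
proof (rule matrix_eq[THEN iffD2], intro allI)
  fix x :: "real^('n+'n)"
  have "- mat 1 *v x = - x"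
    apply (simp add: vec_eq_iff matrix_vector_mult_def mat_def)
    apply (subst sum_negf) apply simp done
  then show "(J_mat ** J_mat) *v x = (- mat 1) *v x"
    by (simp add: matrix_vector_mul_assoc[symmetric] JJ_v)
qed

lemma mneg_l: "(- A) ** (B::real^'a^'b) = - ((A::real^'b^'c) ** B)"
  by (simp add: matrix_matrix_mult_def vec_eq_iff sum_negf)
lemma mneg_r: "(A::real^'b^'c) ** (- B) = - (A ** (B::real^'a^'b))"
  by (simp add: matrix_matrix_mult_def vec_eq_iff sum_negf)
lemma transpose_neg: "transpose (- A) = - transpose (A::real^'a^'b)"
  by (simp add: transpose_def vec_eq_iff)

lemma JT: "transpose (J_mat::'n::finite dmat) = - J_mat"
proof -
  have "\<forall>p q. transpose (J_mat::'n::finite dmat) $ p $ q = (- J_mat) $ p $ q"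
    by (intro allI, case_tac p; case_tac q) (simp_all add: transpose_def J_entry)
  then show ?thesis by (simp add: vec_eq_iff)
qed

lemma tmm_entry: "(transpose S ** M ** S) $ p $ q = column p S \<bullet> (M *v column q (S::real^'a^'a))"
proof -
  have "(transpose S ** M ** S) $ p $ q = (\<Sum>r\<in>UNIV. (\<Sum>s\<in>UNIV. S$s$p * M$s$r) * S$r$q)"
    by (simp add: matrix_matrix_mult_def transpose_def)
  also have "\<dots> = (\<Sum>r\<in>UNIV. \<Sum>s\<in>UNIV. S$s$p * (M$s$r * S$r$q))"
    by (simp add: sum_distrib_right mult.assoc)
  also have "\<dots> = (\<Sum>s\<in>UNIV. \<Sum>r\<in>UNIV. S$s$p * (M$s$r * S$r$q))"
    by (rule sum.swap)
  also have "\<dots> = column p S \<bullet> (M *v column q S)"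
    by (simp add: inner_vec_def matrix_vector_mult_def column_def sum_distrib_left)
  finally show ?thesis .
qed

lemma symp_inv:
  fixes S :: "'n::finite dmat"
  assumes "symplectic S"
  shows "(- (J_mat ** transpose S ** J_mat)) ** S = mat 1"
    "S ** (- (J_mat ** transpose S ** J_mat)) = mat 1"
proof -
  have e: "transpose S ** J_mat ** S = J_mat" using assms by (simp add: symplectic_def)
  have "(- (J_mat ** transpose S ** J_mat)) ** S = - (J_mat ** (transpose S ** J_mat ** S))"
    by (simp add: mneg_l matrix_mul_assoc)
  also have "\<dots> = mat 1" by (simp add: e JJ)
  finally show 1: "(- (J_mat ** transpose S ** J_mat)) ** S = mat 1" .
  then show "S ** (- (J_mat ** transpose S ** J_mat)) = mat 1"
    using matrix_left_right_inverse by blast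
qed

lemma symp_invertible: "symplectic (S::'n::finite dmat) \<Longrightarrow> invertible S"
  using symp_inv invertible_def by blast

lemma symp_transpose:
  fixes S :: "'n::finite dmat"
  assumes "symplectic S"
  shows "S ** J_mat ** transpose S = J_mat"
proof -
  have "S ** (- (J_mat ** transpose S ** J_mat)) = mat 1" using symp_inv[OF assms] by simp
  then have "- (S ** J_mat ** transpose S ** J_mat) = mat 1" by (simp add: mneg_r matrix_mul_assoc)
  then have "- (S ** J_mat ** transpose S ** J_mat) ** J_mat = J_mat" by simp
  then have "(S ** J_mat ** transpose S) ** (- (J_mat ** J_mat)) = J_mat"
    by (simp add: mneg_l mneg_r matrix_mul_assoc)
  then show ?thesis by (simp add: JJ)
qed

lemma symplectic_transpose: "symplectic (S::'n::finite dmat) \<Longrightarrow> symplectic (transpose S)"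
  using symp_transpose by (simp add: symplectic_def)

lemma symp_transpose_inv:
  fixes S :: "'n::finite dmat"
  assumes "symplectic S"
  shows "transpose S ** (- (J_mat ** S ** J_mat)) = mat 1"
    "(- (J_mat ** S ** J_mat)) ** transpose S = mat 1"
  using symp_inv[OF symplectic_transpose[OF assms]] by simp_all

locale spd =
  fixes A :: "'n::finite dmat"
  assumes spd: "sym_posdef A"
begin

definition a :: "real^('n+'n) \<Rightarrow> real^('n+'n) \<Rightarrow> real" where "a x y = x \<bullet> (A *v y)"

lemma AT: "transpose A = A" using spd by (simp add: sym_posdef_def)

lemma a_sym: "a x y = a y x"
proof -
  have "a x y = (x v* A) \<bullet> y" by (simp add: a_def dot_lmul_matrix)
  also have "x v* A = A *v x" by (metis AT transpose_matrix_vector)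
  finally show ?thesis by (simp add: a_def inner_commute)
qed

lemma a_pos: "x \<noteq> 0 \<Longrightarrow> a x x > 0" using spd by (simp add: sym_posdef_def a_def)
lemma a_nonneg: "a x x \<ge> 0" by (cases "x = 0") (auto simp: a_def dest: a_pos)
lemma a_zero_iff: "a x x = 0 \<longleftrightarrow> x = 0" using a_pos by (auto simp: a_def) (metis less_irrefl a_def)

lemma a_add1: "a (x + y) z = a x z + a y z" by (simp add: a_def inner_add_left)
lemma a_add2: "a z (x + y) = a z x + a z y" by (simp add: a_def inner_add_right matrix_vector_right_distrib)
lemma a_diff1: "a (x - y) z = a x z - a y z" by (simp add: a_def inner_diff_left)
lemma a_diff2: "a z (x - y) = a z x - a z y" by (simp add: a_def inner_diff_right matrix_vector_mult_diff_distrib)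
lemma a_scale1: "a (c *\<^sub>R x) z = c * a x z" by (simp add: a_def)
lemma a_scale2: "a z (c *\<^sub>R x) = c * a z x" by (simp add: a_def matrix_vector_mult_scaleR)
lemma a_zero1[simp]: "a 0 z = 0" by (simp add: a_def)
lemma a_zero2[simp]: "a z 0 = 0" by (simp add: a_def)
lemma a_neg1: "a (- x) z = - a x z" by (simp add: a_def)
lemma a_neg2: "a z (- x) = - a z x" by (metis a_sym a_neg1)

lemmas a_lin = a_add1 a_add2 a_diff1 a_diff2 a_scale1 a_scale2 a_neg1 a_neg2

lemma A_inj: "inj ((*v) A)"
proof (rule injI)
  fix x y assume "A *v x = A *v y"
  then have "a (x - y) (x - y) = 0" by (simp add: a_def matrix_vector_mult_diff_distrib)
  then show "x = y" by (simp add: a_zero_iff)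
qed

definition Ainv where "Ainv = (SOME B. A ** B = mat 1)"
lemma A_Ainv: "A ** Ainv = mat 1"
proof -
  have "\<exists>B. B ** A = mat 1" using A_inj matrix_left_invertible_injective by blast
  then have "\<exists>B. A ** B = mat 1" using matrix_left_right_inverse by blast
  then show ?thesis unfolding Ainv_def by (rule someI_ex)
qed

definition K where "K = Ainv ** J_mat"

lemma aK: "a x (K *v y) = x \<bullet> (J_mat *v y)"
  by (simp add: a_def K_def matrix_vector_mul_assoc matrix_mul_assoc A_Ainv)

lemma K_skew: "a (K *v x) y = - a x (K *v y)"
  by (metis a_sym aK J_skew)

lemma K_lin: "K *v (x + y) = K *v x + K *v y" "K *v (x - y) = K *v x - K *v y"
  "K *v (c *\<^sub>R x) = c *\<^sub>R (K *v x)" "K *v (- x) = - (K *v x)"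
  by (simp_all add: matrix_vector_right_distrib matrix_vector_mult_diff_distrib matrix_vector_mult_scaleR)
    (metis diff_0 matrix_vector_mult_diff_distrib matrix_vector_mult_0_right)

lemma K_inj: "K *v x = 0 \<Longrightarrow> x = 0"
proof -
  assume "K *v x = 0"
  then have "(J_mat *v x) \<bullet> (J_mat *v x) = 0" by (metis aK a_zero2)
  then have "J_mat *v x = 0" by simp
  then have "J_mat *v (J_mat *v x) = 0" by simp
  then show "x = 0" by (simp add: JJ_v)
qed

lemma quad_zero:
  fixes b q :: real
  assumes "\<forall>t. 0 \<le> 2*t*b + t^2*q"
  shows "b = 0"
proof (rule ccontr)
  assume "b \<noteq> 0"
  define m where "m = \<bar>q\<bar> + 1"
  define t where "t = - b / m"
  have pos: "m > 0" by (simp add: m_def)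
  have st: "m * t = - b" using pos by (simp add: t_def)
  have e: "m^2*(2*t*b + t^2*q) = 2*b*m*(m*t) + (m*t)^2*q" by (simp add: power2_eq_square algebra_simps)
  have "q*b^2 \<le> \<bar>q\<bar>*b^2" by (simp add: mult_right_mono)
  moreover have "b^2 > 0" using \<open>b \<noteq> 0\<close> by simp
  moreover have "\<bar>q\<bar>*b^2 \<ge> 0" by simp
  moreover have "2*b*m*(m*t) + (m*t)^2*q = - (2*m*b^2) + q*b^2"
    unfolding st by (simp add: power2_eq_square algebra_simps)
  moreover have "2*m*b^2 = 2*\<bar>q\<bar>*b^2 + 2*b^2" by (simp add: m_def algebra_simps)
  ultimately have "2*b*m*(m*t) + (m*t)^2*q < 0" by linarith
  then have "m^2*(2*t*b + t^2*q) < 0" using e by simp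
  then have "2*t*b + t^2*q < 0" using pos by (simp add: mult_less_0_iff)
  then show False using assms by (metis not_le)
qed

lemma eig_step:
  assumes W: "subspace W" "\<forall>x\<in>W. K *v x \<in> W" "W \<noteq> {0}"
  shows "\<exists>x\<in>W. x \<noteq> 0 \<and> (\<exists>l>0. K *v (K *v x) = (-l) *\<^sub>R x)"
proof -
  obtain w where w: "w \<in> W" "w \<noteq> 0" using W(1,3) subspace_0 by blast
  define Sph where "Sph = sphere 0 1 \<inter> W"
  define f where "f x = a (K *v x) (K *v x) / a x x" for x
  have cpt: "compact Sph" unfolding Sph_def
    by (rule compact_Int_closed) (auto intro: closed_subspace W(1))
  have ne: "(1 / norm w) *\<^sub>R w \<in> Sph" using w W(1) by (simp add: Sph_def subspace_scale)
  have Sph0: "x \<in> Sph \<Longrightarrow> x \<noteq> 0" for x by (auto simp: Sph_def)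
  have c1: "continuous_on Sph (\<lambda>x. (K *v x) \<bullet> ((A ** K) *v x))" by (intro continuous_intros)
  have c2: "continuous_on Sph (\<lambda>x. x \<bullet> (A *v x))" by (intro continuous_intros)
  have nz: "\<forall>x\<in>Sph. x \<bullet> (A *v x) \<noteq> 0" using Sph0 a_pos unfolding a_def by force
  have cont: "continuous_on Sph f" unfolding f_def a_def matrix_vector_mul_assoc
    by (rule continuous_on_divide[OF c1 c2 nz])
  obtain x0 where x0: "x0 \<in> Sph" "\<And>y. y \<in> Sph \<Longrightarrow> f y \<le> f x0"
    using continuous_attains_sup[OF cpt _ cont] ne by blast
  define l where "l = f x0"
  have x0W: "x0 \<in> W" and x0nz: "x0 \<noteq> 0" using x0(1) Sph0 by (auto simp: Sph_def)
  have ax0: "a x0 x0 > 0" using a_pos x0nz by blast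
  have Kx0: "K *v x0 \<noteq> 0" using K_inj x0nz by blast
  have lpos: "l > 0" unfolding l_def f_def using ax0 a_pos[OF Kx0] by simp
  have bound: "a (K *v z) (K *v z) \<le> l * a z z" if "z \<in> W" for z
  proof (cases "z = 0")
    case True then show ?thesis by simp
  next
    case False
    define c where "c = 1 / norm z"
    have "c *\<^sub>R z \<in> Sph" using that False W(1) by (simp add: Sph_def c_def subspace_scale)
    then have "f (c *\<^sub>R z) \<le> l" using x0(2) l_def by blast
    moreover have "f (c *\<^sub>R z) = f z" using False
      by (simp add: f_def K_lin a_lin c_def)
    ultimately have "a (K *v z) (K *v z) / a z z \<le> l" by (simp add: f_def)
    then show ?thesis using a_pos[OF False] by (simp add: divide_le_eq)
  qed
  have Q0: "l * a x0 x0 - a (K *v x0) (K *v x0) = 0" using ax0 by (simp add: l_def f_def)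
  have B0: "l * a x0 y - a (K *v x0) (K *v y) = 0" if y: "y \<in> W" for y
  proof -
    define b where "b = l * a x0 y - a (K *v x0) (K *v y)"
    define q where "q = l * a y y - a (K *v y) (K *v y)"
    have "0 \<le> 2*t*b + t^2*q" for t
    proof -
      have "x0 + t *\<^sub>R y \<in> W" using W(1) x0W y by (simp add: subspace_add subspace_scale)
      then have "0 \<le> l * a (x0 + t *\<^sub>R y) (x0 + t *\<^sub>R y)
          - a (K *v (x0 + t *\<^sub>R y)) (K *v (x0 + t *\<^sub>R y))"
        using bound by fastforce
      also have "\<dots> = (l * a x0 x0 - a (K *v x0) (K *v x0)) + 2*t*b + t^2*q"
        by (simp add: b_def q_def K_lin a_lin a_sym[of y x0] a_sym[of "K *v y" "K *v x0"]
            algebra_simps power2_eq_square)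
      finally show ?thesis using Q0 by simp
    qed
    then have "b = 0" using quad_zero by blast
    then show ?thesis by (simp add: b_def)
  qed
  define y where "y = l *\<^sub>R x0 + K *v (K *v x0)"
  have yW: "y \<in> W" using W x0W by (simp add: y_def subspace_add subspace_scale)
  have "\<And>z. a (K *v x0) (K *v z) = - a (K *v (K *v x0)) z" using K_skew by simp
  then have "a y y = 0" using B0[OF yW] by (simp add: y_def a_lin a_sym[of x0 "K *v (K *v x0)"])
  then have "y = 0" by (simp add: a_zero_iff)
  then have "K *v (K *v x0) = (-l) *\<^sub>R x0" by (simp add: y_def eq_neg_iff_add_eq_0 add.commute)
  then show ?thesis using x0W x0nz lpos by blast
qed

end

definition om :: "real^('n::finite+'n) \<Rightarrow> real^('n+'n) \<Rightarrow> real" where "om x y = x \<bullet> (J_mat *v y)"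

definition pu :: "'v \<times> 'v \<times> real \<Rightarrow> 'v" where "pu t = fst t"
definition pv :: "'v \<times> 'v \<times> real \<Rightarrow> 'v" where "pv t = fst (snd t)"
definition pd :: "'v \<times> 'v \<times> real \<Rightarrow> real" where "pd t = snd (snd t)"
lemma p_simps[simp]: "pu (u,v,d) = u" "pv (u,v,d) = v" "pd (u,v,d) = d" by (simp_all add: pu_def pv_def pd_def)

definition vecs :: "('v \<times> 'v \<times> real) list \<Rightarrow> 'v set" where "vecs ps = pu ` set ps \<union> pv ` set ps"

context spd begin

lemma om_aK: "om x y = a x (K *v y)" by (simp add: om_def aK)

definition pair_ok where "pair_ok t \<longleftrightarrow> pd t > 0 \<and> a (pu t) (pu t) = pd t \<and> a (pv t) (pv t) = pd t
   \<and> a (pu t) (pv t) = 0 \<and> om (pu t) (pv t) = 1"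

definition orth where "orth t t' \<longleftrightarrow> (\<forall>p\<in>{pu t, pv t}. \<forall>q\<in>{pu t', pv t'}. a p q = 0 \<and> om p q = 0)"

fun good where
  "good [] = True"
| "good (t # ts) = (pair_ok t \<and> (\<forall>t'\<in>set ts. orth t t') \<and> good ts)"

lemma build:
  assumes "subspace W" "\<forall>x\<in>W. K *v x \<in> W"
  shows "\<exists>ps. good ps \<and> vecs ps \<subseteq> W \<and> W \<subseteq> span (vecs ps)"
  using assms
proof (induction "dim W" arbitrary: W rule: less_induct)
  case less
  show ?case
  proof (cases "W = {0}")
    case True
    then show ?thesis by (intro exI[of _ "[]"]) (simp add: vecs_def)
  next
    case False
    obtain x0 l where x0: "x0 \<in> W" "x0 \<noteq> 0" "l > 0" "K *v (K *v x0) = (-l) *\<^sub>R x0"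
      using eig_step[OF less.prems False] by blast
    define sl where "sl = sqrt l"
    define c where "c = a x0 x0"
    have slpos: "sl > 0" using x0 by (simp add: sl_def)
    have sl2: "sl * sl = l" using x0 by (simp add: sl_def)
    have cpos: "c > 0" using a_pos x0 by (simp add: c_def)
    define tt where "tt = 1 / sqrt (sl * c)"
    have tt2: "tt * tt = 1 / (sl * c)" using slpos cpos by (simp add: tt_def)
    define v where "v = tt *\<^sub>R x0"
    define u where "u = (1 / sl) *\<^sub>R (K *v v)"
    define d where "d = 1 / sl"
    have KKv: "K *v (K *v v) = (-l) *\<^sub>R v" using x0 by (simp add: v_def K_lin)
    have Kv: "K *v v = sl *\<^sub>R u" using slpos by (simp add: u_def)
    have Ku: "K *v u = (- (l / sl)) *\<^sub>R v" by (simp add: u_def K_lin KKv)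
    have vW: "v \<in> W" using x0 less.prems by (simp add: v_def subspace_scale)
    have uW: "u \<in> W" using vW less.prems by (simp add: u_def subspace_scale)
    have avv: "a v v = d" using tt2 slpos cpos by (simp add: v_def d_def a_lin c_def[symmetric] field_simps)
    have aKvKv: "a (K *v v) (K *v v) = l * d"
      using K_skew[of v "K *v v"] by (simp add: KKv a_lin avv)
    have auu: "a u u = d" using sl2 slpos x0(3) by (simp add: u_def a_lin aKvKv field_simps)
    have auv: "a u v = 0"
    proof -
      have "a (K *v v) v = - a (K *v v) v" using K_skew[of v v] a_sym by metis
      then show ?thesis by (simp add: u_def a_lin)
    qed
    have omuv: "om u v = 1" using sl2 slpos x0(3)
      by (simp add: om_aK u_def a_lin aKvKv d_def field_simps)
    define W' where "W' = {z \<in> W. a z u = 0 \<and> a z v = 0}"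
    have subW': "subspace W'" using less.prems(1)
      unfolding W'_def subspace_def by (auto simp: a_lin)
    have invW': "\<forall>x\<in>W'. K *v x \<in> W'"
    proof
      fix z assume z: "z \<in> W'"
      have "a (K *v z) u = 0" using z K_skew[of z u] by (simp add: W'_def Ku a_lin)
      moreover have "a (K *v z) v = 0" using z K_skew[of z v] by (simp add: W'_def Kv a_lin)
      ultimately show "K *v z \<in> W'" using z less.prems by (simp add: W'_def)
    qed
    have dpos: "d > 0" using slpos by (simp add: d_def)
    have "v \<notin> W'" using avv dpos by (simp add: W'_def)
    then have "W' \<subset> W" using vW by (auto simp: W'_def)
    then have "dim W' < dim W" using subW' less.prems(1)
      by (metis dim_psubset span_eq_iff)
    then obtain ps' where ps': "good ps'" "vecs ps' \<subseteq> W'" "W' \<subseteq> span (vecs ps')"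
      using less.hyps subW' invW' by blast
    define ps where "ps = (u, v, d) # ps'"
    have "pair_ok (u, v, d)" using dpos auu avv auv omuv by (simp add: pair_ok_def)
    moreover have "orth (u, v, d) t'" if "t' \<in> set ps'" for t'
    proof -
      have q: "q \<in> W'" if "q \<in> {pu t', pv t'}" for q using ps'(2) that \<open>t' \<in> set ps'\<close>
        by (auto simp: vecs_def)
      have "a p q = 0 \<and> om p q = 0" if "p \<in> {u, v}" "q \<in> {pu t', pv t'}" for p q
      proof -
        have qW: "a q u = 0" "a q v = 0" using q[OF that(2)] by (auto simp: W'_def)
        have "om u q = 0" using K_skew[of u q] qW by (simp add: om_aK Ku a_lin a_sym[of v q])
        moreover have "om v q = 0" using K_skew[of v q] qW by (simp add: om_aK Kv a_lin a_sym[of u q])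
        ultimately show ?thesis using that qW a_sym by auto
      qed
      then show ?thesis by (simp add: orth_def)
    qed
    ultimately have "good ps" using ps' by (simp add: ps_def)
    moreover have "vecs ps \<subseteq> W" using ps' uW vW by (auto simp: vecs_def ps_def W'_def)
    moreover have "W \<subseteq> span (vecs ps)"
    proof
      fix z assume zW: "z \<in> W"
      define z' where "z' = z - (a z u / d) *\<^sub>R u - (a z v / d) *\<^sub>R v"
      have "z' \<in> W" using zW uW vW less.prems(1) by (simp add: z'_def subspace_diff subspace_scale)
      moreover have "a z' u = 0" "a z' v = 0" using dpos auu avv auv a_sym[of v u]
        by (simp_all add: z'_def a_lin)
      ultimately have "z' \<in> W'" by (simp add: W'_def)
      then have "z' \<in> span (vecs ps)" using ps'(3) span_mono[of "vecs ps'" "vecs ps"]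
        by (auto simp: vecs_def ps_def)
      moreover have "u \<in> span (vecs ps)" "v \<in> span (vecs ps)"
        by (auto simp: vecs_def ps_def intro: span_base)
      ultimately have "z' + (a z u / d) *\<^sub>R u + (a z v / d) *\<^sub>R v \<in> span (vecs ps)"
        by (intro span_add span_scale) auto
      then show "z \<in> span (vecs ps)" by (simp add: z'_def)
    qed
    ultimately show ?thesis by blast
  qed
qed

end

lemma card_UNIV_plus: "CARD('n::finite + 'n) = 2 * CARD('n)"
  by (simp add: UNIV_Plus_UNIV[symmetric] card_Plus del: UNIV_Plus_UNIV)

lemma dim_UNIV_dmat: "dim (UNIV :: (real^('n::finite+'n)) set) = 2 * CARD('n)"
  using vec_dim_card[where 'a=real and 'n="'n+'n"] dim_vec_eq card_UNIV_plus by metis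

context spd begin

lemma om_anti: "om x y = - om y x" unfolding om_def by (rule J_skew)
lemma om_self: "om x x = 0" by (simp add: om_def J_self)

lemma orth_sym: "orth t t' \<Longrightarrow> orth t' t"
proof -
  assume o: "orth t t'"
  have "a q p = 0 \<and> om q p = 0" if "p \<in> {pu t, pv t}" "q \<in> {pu t', pv t'}" for p q
  proof -
    have "a p q = 0 \<and> om p q = 0" using o that unfolding orth_def by blast
    then show ?thesis using a_sym[of p q] om_anti[of p q] by simp
  qed
  then show "orth t' t" unfolding orth_def by blast
qed

lemma good_nth:
  assumes "good ps" "i < length ps"
  shows "pair_ok (ps ! i)"
  using assms by (induction ps arbitrary: i) (auto simp: nth_Cons split: nat.splits)

lemma good_nth2:
  assumes "good ps" "i < length ps" "j < length ps" "i \<noteq> j"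
  shows "orth (ps ! i) (ps ! j)"
  using assms
proof (induction ps arbitrary: i j)
  case Nil then show ?case by simp
next
  case (Cons t ts)
  show ?case
  proof (cases i)
    case 0
    then obtain j' where "j = Suc j'" using Cons.prems by (cases j) auto
    have "t' \<in> set ts \<Longrightarrow> orth t t'" for t' using Cons.prems(1) by simp
    moreover have "ts ! j' \<in> set ts" using Cons.prems(3) \<open>j = Suc j'\<close> by simp
    ultimately show ?thesis using 0 \<open>j = Suc j'\<close> by simp
  next
    case (Suc i')
    show ?thesis
    proof (cases j)
      case 0
      have "t' \<in> set ts \<Longrightarrow> orth t t'" for t' using Cons.prems(1) by simp
      moreover have "ts ! i' \<in> set ts" using Cons.prems(2) Suc by simp
      ultimately show ?thesis using 0 Suc by (simp add: orth_sym)
    next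
      case (Suc j')
      have "orth (ts ! i') (ts ! j')"
        using Cons.IH[of i' j'] Cons.prems Suc \<open>i = Suc i'\<close> by simp
      then show ?thesis using Suc \<open>i = Suc i'\<close> by simp
    qed
  qed
qed

definition fam :: "((real^('n+'n)) \<times> (real^('n+'n)) \<times> real) list \<Rightarrow> nat \<times> bool \<Rightarrow> real^('n+'n)" where
  "fam ps x = (if snd x then pu (ps ! fst x) else pv (ps ! fst x))"

lemma fam_a:
  assumes "good ps" "i < length ps" "j < length ps"
  shows "a (fam ps (i,b)) (fam ps (j,b')) = (if i = j \<and> b = b' then pd (ps ! i) else 0)"
proof (cases "i = j")
  case True
  then show ?thesis using good_nth[OF assms(1,2)] a_sym[of "pu (ps ! i)" "pv (ps ! i)"]
    by (auto simp: fam_def pair_ok_def)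
next
  case False
  then show ?thesis using good_nth2[OF assms False] by (auto simp: fam_def orth_def)
qed

lemma fam_om:
  assumes "good ps" "i < length ps" "j < length ps"
  shows "om (fam ps (i,True)) (fam ps (j,False)) = (if i = j then 1 else 0)"
    "om (fam ps (i,False)) (fam ps (j,True)) = (if i = j then -1 else 0)"
    "om (fam ps (i,b)) (fam ps (j,b)) = 0"
proof -
  show "om (fam ps (i,True)) (fam ps (j,False)) = (if i = j then 1 else 0)"
  proof (cases "i = j")
    case True then show ?thesis using good_nth[OF assms(1,2)] by (simp add: fam_def pair_ok_def)
  next
    case False then show ?thesis using good_nth2[OF assms False] by (simp add: fam_def orth_def)
  qed
  show "om (fam ps (i,False)) (fam ps (j,True)) = (if i = j then -1 else 0)"
  proof (cases "i = j")
    case True then show ?thesis using good_nth[OF assms(1,2)] om_anti[of "pv (ps!i)" "pu (ps!i)"]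
      by (simp add: fam_def pair_ok_def)
  next
    case False then show ?thesis using good_nth2[OF assms False] by (simp add: fam_def orth_def)
  qed
  show "om (fam ps (i,b)) (fam ps (j,b)) = 0"
  proof (cases "i = j")
    case True then show ?thesis by (simp add: om_self)
  next
    case False then show ?thesis using good_nth2[OF assms False] by (simp add: fam_def orth_def)
  qed
qed

lemma a_orth_indep:
  assumes "\<forall>x\<in>V. a x x > 0" "\<forall>x\<in>V. \<forall>y\<in>V. x \<noteq> y \<longrightarrow> a x y = 0"
  shows "independent V"
proof
  assume "dependent V"
  then obtain x where x: "x \<in> V" "x \<in> span (V - {x})" unfolding dependent_def by blast
  have "subspace {z. a z x = 0}" unfolding subspace_def by (auto simp: a_lin)
  moreover have "V - {x} \<subseteq> {z. a z x = 0}" using assms(2) x(1) by auto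
  ultimately have "span (V - {x}) \<subseteq> {z. a z x = 0}" by (rule span_minimal[rotated])
  then have "a x x = 0" using x by auto
  then show False using assms(1) x by force
qed

lemma williamson_ex: "\<exists>S d. williamson A S d"
proof -
  obtain ps where ps: "good ps" "UNIV \<subseteq> span (vecs ps)"
    using build[of UNIV] by auto
  define m where "m = length ps"
  define I where "I = {..<m} \<times> (UNIV :: bool set)"
  have famI: "fam ps ` I = vecs ps"
  proof
    show "fam ps ` I \<subseteq> vecs ps" by (auto simp: I_def vecs_def fam_def m_def)
    show "vecs ps \<subseteq> fam ps ` I"
    proof
      fix y assume "y \<in> vecs ps"
      then obtain t where t: "t \<in> set ps" "y = pu t \<or> y = pv t" by (auto simp: vecs_def)
      then obtain i where i: "i < m" "t = ps ! i" by (auto simp: in_set_conv_nth m_def)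
      have "y = fam ps (i, True) \<or> y = fam ps (i, False)" using t i by (auto simp: fam_def)
      then show "y \<in> fam ps ` I" using i by (auto simp: I_def)
    qed
  qed
  have pdpos: "i < m \<Longrightarrow> pd (ps ! i) > 0" for i using good_nth[OF ps(1)] by (simp add: m_def pair_ok_def)
  have aI: "x \<in> I \<Longrightarrow> y \<in> I \<Longrightarrow> a (fam ps x) (fam ps y) = (if x = y then pd (ps ! fst x) else 0)" for x y
    using fam_a[OF ps(1), of "fst x" "fst y" "snd x" "snd y"] by (auto simp: I_def m_def prod_eq_iff)
  have inj: "inj_on (fam ps) I"
  proof (rule inj_onI)
    fix x y assume "x \<in> I" "y \<in> I" "fam ps x = fam ps y"
    then show "x = y" using aI[of x y] aI[of x x] pdpos by (auto simp: I_def) (metis less_irrefl)+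
  qed
  have indep: "independent (vecs ps)" unfolding famI[symmetric]
    by (rule a_orth_indep) (use aI pdpos inj in \<open>auto simp: I_def inj_on_def\<close>)
  have cardI: "card (vecs ps) = 2 * m"
    using card_image[OF inj] famI by (simp add: I_def card_cartesian_product)
  have "dim (span (vecs ps)) = 2 * m" using dim_span_eq_card_independent[OF indep] cardI by simp
  moreover have "span (vecs ps) = UNIV" using ps(2) by auto
  ultimately have mn: "m = CARD('n)" using dim_UNIV_dmat[where 'n='n] by simp
  obtain h where h: "bij_betw h (UNIV::'n set) {0..<CARD('n)}" using ex_bij_betw_finite_nat[of "UNIV::'n set"] by auto
  have hm: "h j < m" for j using h mn by (auto simp: bij_betw_def)
  have hinj: "h i = h j \<longleftrightarrow> i = j" for i j using h by (auto simp: bij_betw_def inj_on_def)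
  define col where "col p = (case p of Inl j \<Rightarrow> fam ps (h j, True) | Inr j \<Rightarrow> fam ps (h j, False))" for p
  define S :: "'n dmat" where "S = (\<chi> p q. col q $ p)"
  define dv :: "real^'n" where "dv = (\<chi> j. pd (ps ! h j))"
  have colS: "column q S = col q" for q by (simp add: S_def column_def vec_eq_iff)
  have "transpose S ** J_mat ** S = J_mat"
  proof -
    have "\<forall>p q. (transpose S ** J_mat ** S) $ p $ q = J_mat $ p $ q"
    proof (intro allI)
      fix p q :: "'n+'n"
      have "(transpose S ** J_mat ** S) $ p $ q = om (col p) (col q)" by (simp add: tmm_entry colS om_def)
      also have "\<dots> = J_mat $ p $ q"
        by (cases p; cases q) (simp_all add: col_def fam_om[OF ps(1)] hm[unfolded m_def] J_entry hinj)
      finally show "(transpose S ** J_mat ** S) $ p $ q = J_mat $ p $ q" .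
    qed
    then show ?thesis by (simp add: vec_eq_iff)
  qed
  moreover have "transpose S ** A ** S = blockdiag dv"
  proof -
    have "\<forall>p q. (transpose S ** A ** S) $ p $ q = blockdiag dv $ p $ q"
    proof (intro allI)
      fix p q :: "'n+'n"
      have "(transpose S ** A ** S) $ p $ q = a (col p) (col q)" by (simp add: tmm_entry colS a_def)
      also have "\<dots> = blockdiag dv $ p $ q"
        by (cases p; cases q) (simp_all add: col_def fam_a[OF ps(1)] hm[unfolded m_def] blockdiag_def dv_def hinj)
      finally show "(transpose S ** A ** S) $ p $ q = blockdiag dv $ p $ q" .
    qed
    then show ?thesis by (simp add: vec_eq_iff)
  qed
  moreover have "\<forall>i. dv $ i > 0" using pdpos hm by (simp add: dv_def)
  ultimately show ?thesis unfolding williamson_def symplectic_def by blast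
qed

end

definition dsq :: "real^'n \<Rightarrow> real^'n" where "dsq d = (\<chi> j. (d$j)^2)"

lemma bd_mulv: "(blockdiag d *v x) $ Inl i = d$i * x $ Inl i" "(blockdiag d *v x) $ Inr i = d$i * x $ Inr i"
  by (simp_all add: blockdiag_def matrix_vector_mult_def sum_UNIV_plus)

lemma vec_plus_eq: "(x::real^('n::finite+'n)) = y \<longleftrightarrow> (\<forall>i. x $ Inl i = y $ Inl i) \<and> (\<forall>i. x $ Inr i = y $ Inr i)"
  by (metis sum.exhaust vec_eq_iff)

lemma JD2: "(J_mat ** blockdiag d) ** (J_mat ** blockdiag d) = - blockdiag (dsq (d::real^'n::finite))"
proof (rule matrix_eq[THEN iffD2], intro allI)
  fix x :: "real^('n+'n)"
  have "- blockdiag (dsq d) *v x = - (blockdiag (dsq d) *v x)"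
    by (simp add: matrix_vector_mult_def vec_eq_iff sum_negf)
  then show "((J_mat ** blockdiag d) ** (J_mat ** blockdiag d)) *v x = - blockdiag (dsq d) *v x"
    by (simp add: matrix_vector_mul_assoc[symmetric] vec_plus_eq J_mulv bd_mulv dsq_def power2_eq_square)
qed

context spd begin

definition M where "M = - ((J_mat ** A) ** (J_mat ** A))"

lemma wil_M:
  assumes "williamson A S d"
  shows "M ** S = S ** blockdiag (dsq d)"
proof -
  have sy: "symplectic S" and D: "transpose S ** A ** S = blockdiag d" using assms by (auto simp: williamson_def)
  define Y where "Y = - (J_mat ** S ** J_mat)"
  have "Y ** transpose S = mat 1" using symp_transpose_inv[OF sy] by (simp add: Y_def)
  then have AS: "A ** S = Y ** blockdiag d"
    by (metis D matrix_mul_assoc matrix_mul_lid)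
  have JAS: "(J_mat ** A) ** S = S ** (J_mat ** blockdiag d)"
  proof -
    have "(J_mat ** A) ** S = J_mat ** Y ** blockdiag d" by (simp add: AS matrix_mul_assoc[symmetric])
    also have "\<dots> = - ((J_mat ** J_mat) ** S ** J_mat ** blockdiag d)"
      by (simp add: Y_def mneg_l mneg_r matrix_mul_assoc)
    also have "\<dots> = S ** (J_mat ** blockdiag d)"
      by (simp add: JJ mneg_l matrix_mul_assoc)
    finally show ?thesis .
  qed
  have "((J_mat ** A) ** (J_mat ** A)) ** S = S ** ((J_mat ** blockdiag d) ** (J_mat ** blockdiag d))"
    by (metis JAS matrix_mul_assoc)
  then show ?thesis by (simp add: M_def mneg_l mneg_r JD2)
qed

lemma eigdim:
  assumes "williamson A S d"
  shows "dim {x. M *v x = \<mu> *\<^sub>R x} = 2 * card {j. (d$j)^2 = \<mu>}"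
proof -
  have MS: "M ** S = S ** blockdiag (dsq d)" using wil_M[OF assms] .
  have sy: "symplectic S" using assms by (simp add: williamson_def)
  obtain Si where Si: "Si ** S = mat 1" "S ** Si = mat 1" using symp_invertible[OF sy] invertible_def by blast
  define Q where "Q = {q::'n+'n. (case q of Inl j \<Rightarrow> (d$j)^2 | Inr j \<Rightarrow> (d$j)^2) = \<mu>}"
  define Z where "Z = {x::real^('n+'n). \<forall>i. i \<notin> Q \<longrightarrow> x$i = 0}"
  have DZ: "blockdiag (dsq d) *v z = \<mu> *\<^sub>R z \<longleftrightarrow> z \<in> Z" for z
    by (auto simp: Z_def Q_def vec_plus_eq bd_mulv dsq_def split: sum.splits)
  have "{x. M *v x = \<mu> *\<^sub>R x} = (\<lambda>z. S *v z) ` Z"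
  proof (intro set_eqI iffI)
    fix x assume "x \<in> {x. M *v x = \<mu> *\<^sub>R x}"
    then have x: "M *v x = \<mu> *\<^sub>R x" by simp
    define z where "z = Si *v x"
    have xz: "x = S *v z" by (simp add: z_def matrix_vector_mul_assoc Si)
    have "S *v (blockdiag (dsq d) *v z) = S *v (\<mu> *\<^sub>R z)"
      using x by (simp add: xz matrix_vector_mul_assoc MS[symmetric] matrix_vector_mult_scaleR)
    then have "Si *v (S *v (blockdiag (dsq d) *v z)) = Si *v (S *v (\<mu> *\<^sub>R z))" by simp
    then have "blockdiag (dsq d) *v z = \<mu> *\<^sub>R z" by (simp add: matrix_vector_mul_assoc matrix_mul_assoc Si)
    then show "x \<in> (\<lambda>z. S *v z) ` Z" using DZ xz by blast
  next
    fix x assume "x \<in> (\<lambda>z. S *v z) ` Z"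
    then obtain z where z: "z \<in> Z" "x = S *v z" by blast
    have "M *v x = S *v (blockdiag (dsq d) *v z)" by (simp add: z matrix_vector_mul_assoc MS)
    also have "\<dots> = \<mu> *\<^sub>R x" using DZ[of z] z by (simp add: matrix_vector_mult_scaleR)
    finally show "x \<in> {x. M *v x = \<mu> *\<^sub>R x}" by simp
  qed
  moreover have "dim ((\<lambda>z. S *v z) ` Z) = dim Z"
  proof (rule dim_image_eq)
    show "linear ((*v) S)" by (rule matrix_vector_mul_linear)
    show "inj_on ((*v) S) (span Z)"
      by (rule inj_onI) (metis Si(1) matrix_vector_mul_assoc matrix_vector_mul_lid)
  qed
  moreover have "dim Z = card Q" unfolding Z_def dim_vec_eq[symmetric] by (rule dim_substandard_cart)
  moreover have "card Q = 2 * card {j. (d$j)^2 = \<mu>}"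
  proof -
    have "Q = Inl ` {j. (d$j)^2 = \<mu>} \<union> Inr ` {j. (d$j)^2 = \<mu>}"
      by (auto simp: Q_def split: sum.splits) (metis (mono_tags, lifting) imageI mem_Collect_eq sum.exhaust)
    moreover have "Inl ` {j. (d$j)^2 = \<mu>} \<inter> Inr ` {j. (d$j)^2 = \<mu>} = {}" by auto
    ultimately show ?thesis
      by (simp add: card_Un_disjoint card_image inj_on_def)
  qed
  ultimately show ?thesis by simp
qed

end

lemma count_incr_mset: "count (image_mset (\<lambda>i. x $ i) (mset_set (UNIV::'n::finite set))) v = card {j. x $ j = v}"
  by (simp add: count_image_mset' eq_commute)

context spd begin

lemma incr_unique:
  assumes "williamson A S d" "williamson A S' e"
  shows "incr d = incr e"
proof -
  have dpos: "\<forall>i. d$i > 0" and epos: "\<forall>i. e$i > 0" using assms by (auto simp: williamson_def)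
  have c2: "card {j. (d$j)^2 = \<mu>} = card {j. (e$j)^2 = \<mu>}" for \<mu>
    using eigdim[OF assms(1), of \<mu>] eigdim[OF assms(2), of \<mu>] by simp
  have "card {j. d $ j = v} = card {j. e $ j = v}" for v
  proof (cases "v > 0")
    case True
    have "{j. d $ j = v} = {j. (d$j)^2 = v^2}" "{j. e $ j = v} = {j. (e$j)^2 = v^2}"
      using dpos epos True by (auto simp: power2_eq_iff_nonneg less_imp_le)
    then show ?thesis using c2 by simp
  next
    case False
    then have "{j. d $ j = v} = {}" "{j. e $ j = v} = {}" using dpos epos by force+
    then show ?thesis by simp
  qed
  then have "image_mset (\<lambda>i. d $ i) (mset_set (UNIV::'n set)) = image_mset (\<lambda>i. e $ i) (mset_set UNIV)"
    by (intro multiset_eqI) (simp add: count_incr_mset)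
  then show ?thesis by (simp add: incr_def)
qed

lemma symp_eigs_eq:
  assumes "williamson A S d"
  shows "symp_eigs A = incr d"
  unfolding symp_eigs_def
proof (rule the_equality)
  show "\<exists>S' d'. williamson A S' d' \<and> incr d = incr d'" using assms by blast
  fix l assume "\<exists>S' d'. williamson A S' d' \<and> l = incr d'"
  then show "l = incr d" using incr_unique[OF assms] by metis
qed

end

lemma J_norm: "(J_mat *v x) \<bullet> ((J_mat::'n::finite dmat) *v x) = x \<bullet> x"
  by (simp add: inner_vec_def sum_UNIV_plus J_mulv add.commute)

lemma inner_plus: "(x::real^('n::finite+'n)) \<bullet> y = (\<Sum>i\<in>UNIV. x$Inl i * y$Inl i) + (\<Sum>i\<in>UNIV. x$Inr i * y$Inr i)"
  by (simp add: inner_vec_def sum_UNIV_plus)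

lemma sq_expand: "(a - c) \<bullet> (a - c) = a \<bullet> a - 2 * (a \<bullet> c) + c \<bullet> (c::'a::real_inner)"
  by (simp add: inner_diff_left inner_diff_right inner_commute[of c a])

context spd begin

definition Minv :: "'n dmat \<Rightarrow> 'n dmat" where "Minv S = - (J_mat ** transpose S ** J_mat)"

lemma trace_formula:
  assumes W: "williamson A S d"
  defines "R \<equiv> \<lambda>q. row q (Minv S)"
  shows "(\<Sum>p\<in>UNIV. A$p$p) = 2 * (\<Sum>j\<in>UNIV. d$j)
     + (\<Sum>j\<in>UNIV. d$j * ((R (Inl j) - J_mat *v R (Inr j)) \<bullet> (R (Inl j) - J_mat *v R (Inr j))))"
proof -
  have sy: "symplectic S" and D: "transpose S ** A ** S = blockdiag d" using W by (auto simp: williamson_def)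
  define Mi where "Mi = Minv S"
  have MiS: "Mi ** S = mat 1" "S ** Mi = mat 1" using symp_inv[OF sy] by (simp_all add: Mi_def Minv_def)
  have tMiS: "transpose Mi ** transpose S = mat 1" using MiS(2) by (metis matrix_transpose_mul transpose_mat)
  have AMi: "A = transpose Mi ** blockdiag d ** Mi"
  proof -
    have "transpose Mi ** blockdiag d ** Mi = (transpose Mi ** transpose S) ** A ** (S ** Mi)"
      by (simp add: D[symmetric] matrix_mul_assoc)
    then show ?thesis by (simp add: tMiS MiS)
  qed
  have Misy: "symplectic Mi"
  proof -
    have "(transpose Mi ** transpose S) ** J_mat ** (S ** Mi) = transpose Mi ** (transpose S ** J_mat ** S) ** Mi"
      by (simp add: matrix_mul_assoc)
    then show ?thesis using sy by (simp add: symplectic_def tMiS MiS)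
  qed
  have rowJ: "R p \<bullet> (J_mat *v R q) = J_mat $ p $ q" for p q
  proof -
    have "(transpose (transpose Mi) ** J_mat ** transpose Mi) $ p $ q = R p \<bullet> (J_mat *v R q)"
      using tmm_entry[of "transpose Mi" J_mat p q] by (simp add: R_def Mi_def)
    then show ?thesis using symp_transpose[OF Misy] by simp
  qed
  have diag: "A $ p $ p = (\<Sum>q\<in>UNIV. (Mi$q$p)^2 * (blockdiag d *v axis q 1) $ q)" for p
  proof -
    have "A $ p $ p = column p Mi \<bullet> (blockdiag d *v column p Mi)"
      by (subst AMi) (simp add: tmm_entry)
    also have "\<dots> = (\<Sum>q\<in>UNIV. (Mi$q$p)^2 * (blockdiag d *v axis q 1) $ q)"
      apply (simp add: inner_plus sum_UNIV_plus bd_mulv column_def power2_eq_square)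
      apply (simp add: matrix_vector_mult_def blockdiag_def axis_def sum_UNIV_plus mult_ac)
      done
    finally show ?thesis .
  qed
  have "(\<Sum>p\<in>UNIV. A$p$p) = (\<Sum>q\<in>UNIV. (blockdiag d *v axis q 1) $ q * (R q \<bullet> R q))"
    unfolding diag
    by (subst sum.swap) (simp add: R_def Mi_def[symmetric] inner_vec_def row_def sum_distrib_left power2_eq_square mult_ac)
  also have "\<dots> = (\<Sum>j\<in>UNIV. d$j * (R (Inl j) \<bullet> R (Inl j) + R (Inr j) \<bullet> R (Inr j)))"
    by (simp add: sum_UNIV_plus bd_mulv axis_def distrib_left sum.distrib)
  also have "\<dots> = (\<Sum>j\<in>UNIV. 2 * d$j + d$j * ((R (Inl j) - J_mat *v R (Inr j)) \<bullet> (R (Inl j) - J_mat *v R (Inr j))))"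
  proof (rule sum.cong[OF refl])
    fix j
    have e1: "(R (Inl j) - J_mat *v R (Inr j)) \<bullet> (R (Inl j) - J_mat *v R (Inr j))
       = R (Inl j) \<bullet> R (Inl j) - 2 + R (Inr j) \<bullet> R (Inr j)"
      using sq_expand[of "R (Inl j)" "J_mat *v R (Inr j)"] J_norm[of "R (Inr j)"] rowJ[of "Inl j" "Inr j"]
      by (simp add: J_entry)
    show "d$j * (R (Inl j) \<bullet> R (Inl j) + R (Inr j) \<bullet> R (Inr j)) = 2 * d$j + d$j * ((R (Inl j) - J_mat *v R (Inr j)) \<bullet> (R (Inl j) - J_mat *v R (Inr j)))"
      unfolding e1 by (simp add: distrib_left right_diff_distrib)
  qed
  also have "\<dots> = 2 * (\<Sum>j\<in>UNIV. d$j) + (\<Sum>j\<in>UNIV. d$j * ((R (Inl j) - J_mat *v R (Inr j)) \<bullet> (R (Inl j) - J_mat *v R (Inr j))))"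
    by (simp add: sum.distrib sum_distrib_left)
  finally show ?thesis .
qed

end

lemma mmt_entry: "(X ** transpose X) $ p $ q = row p X \<bullet> row q (X::real^'a^'a)"
  by (simp add: matrix_matrix_mult_def transpose_def inner_vec_def row_def mult_ac)

context spd begin

lemma rowJ_lemma:
  assumes sy: "symplectic S"
  shows "row p (Minv S) \<bullet> (J_mat *v row q (Minv S)) = J_mat $ p $ q"
proof -
  define Mi where "Mi = Minv S"
  have MiS: "Mi ** S = mat 1" "S ** Mi = mat 1" using symp_inv[OF sy] by (simp_all add: Mi_def Minv_def)
  have tMiS: "transpose Mi ** transpose S = mat 1" using MiS(2) by (metis matrix_transpose_mul transpose_mat)
  have Misy: "symplectic Mi"
  proof -
    have "(transpose Mi ** transpose S) ** J_mat ** (S ** Mi) = transpose Mi ** (transpose S ** J_mat ** S) ** Mi"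
      by (simp add: matrix_mul_assoc)
    then show ?thesis using sy by (simp add: symplectic_def tMiS MiS)
  qed
  have "(transpose (transpose Mi) ** J_mat ** transpose Mi) $ p $ q = row p Mi \<bullet> (J_mat *v row q Mi)"
    using tmm_entry[of "transpose Mi" J_mat p q] by simp
  then show ?thesis using symp_transpose[OF Misy] by (simp add: Mi_def)
qed

lemma trace_ge:
  assumes "williamson A S d"
  shows "(\<Sum>p\<in>UNIV. A$p$p) \<ge> 2 * (\<Sum>j\<in>UNIV. d$j)"
proof -
  have "\<forall>j. d$j > 0" using assms by (simp add: williamson_def)
  then have "(\<Sum>j\<in>UNIV. d$j * ((row (Inl j) (Minv S) - J_mat *v row (Inr j) (Minv S)) \<bullet> (row (Inl j) (Minv S) - J_mat *v row (Inr j) (Minv S)))) \<ge> 0"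
    by (intro sum_nonneg mult_nonneg_nonneg) (auto simp: less_imp_le)
  then show ?thesis using trace_formula[OF assms] by simp
qed

lemma trace_eq_orth:
  assumes W: "williamson A S d" and eq: "(\<Sum>p\<in>UNIV. A$p$p) = 2 * (\<Sum>j\<in>UNIV. d$j)"
  shows "orthogonal_matrix S"
proof -
  have sy: "symplectic S" and dpos: "\<forall>j. d$j > 0" using W by (auto simp: williamson_def)
  define Mi where "Mi = Minv S"
  define R where "R q = row q Mi" for q
  have MiS: "Mi ** S = mat 1" "S ** Mi = mat 1" using symp_inv[OF sy] by (simp_all add: Mi_def Minv_def)
  have rJ: "R p \<bullet> (J_mat *v R q) = J_mat $ p $ q" for p q using rowJ_lemma[OF sy] by (simp add: R_def Mi_def)
  define v where "v j = R (Inl j) - J_mat *v R (Inr j)" for j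
  have "(\<Sum>j\<in>UNIV. d$j * (v j \<bullet> v j)) = 0" using trace_formula[OF W] eq by (simp add: v_def R_def Mi_def)
  moreover have "\<forall>j\<in>UNIV. d$j * (v j \<bullet> v j) \<ge> 0" using dpos by (simp add: less_imp_le)
  ultimately have "\<forall>j\<in>UNIV. d$j * (v j \<bullet> v j) = 0" using sum_nonneg_eq_0_iff[of UNIV "\<lambda>j. d$j * (v j \<bullet> v j)"] by simp
  then have v0: "v j = 0" for j using dpos by (metis UNIV_I inner_eq_zero_iff mult_eq_0_iff less_irrefl)
  have R1: "R (Inl j) = J_mat *v R (Inr j)" for j using v0[of j] by (simp add: v_def)
  have R2: "R (Inr j) = - (J_mat *v R (Inl j))" for j using R1[of j] by (simp add: JJ_v)
  have "Mi ** transpose Mi = mat 1"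
  proof -
    have "\<forall>p q. (Mi ** transpose Mi) $ p $ q = mat 1 $ p $ q"
    proof (intro allI)
      fix p q :: "'n + 'n"
      have "(Mi ** transpose Mi) $ p $ q = R p \<bullet> R q" by (simp add: mmt_entry R_def)
      also have "\<dots> = mat 1 $ p $ q"
      proof (cases p; cases q)
        fix i k assume "p = Inl i" "q = Inl k"
        then show ?thesis using rJ[of "Inl i" "Inr k"] by (simp add: R1[of k] J_entry mat_def)
      next
        fix i k assume "p = Inl i" "q = Inr k"
        then show ?thesis using rJ[of "Inl i" "Inl k"] by (simp add: R2[of k] J_entry mat_def)
      next
        fix i k assume "p = Inr i" "q = Inl k"
        then show ?thesis using rJ[of "Inr i" "Inr k"] by (simp add: R1[of k] J_entry mat_def)
      next
        fix i k assume "p = Inr i" "q = Inr k"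
        then show ?thesis using rJ[of "Inr i" "Inl k"] by (simp add: R2[of k] J_entry mat_def)
      qed
      finally show "(Mi ** transpose Mi) $ p $ q = mat 1 $ p $ q" .
    qed
    then show ?thesis by (simp add: vec_eq_iff)
  qed
  then have "S = transpose Mi" using MiS(2) by (metis matrix_mul_assoc matrix_mul_lid matrix_mul_rid)
  then have "transpose S ** S = mat 1" using \<open>Mi ** transpose Mi = mat 1\<close> by simp
  then show ?thesis by (simp add: orthogonal_matrix)
qed

end

lemma incr_perm:
  fixes x :: "real^'n::finite"
  shows "\<exists>xs. distinct xs \<and> set xs = UNIV \<and> sorted (map (\<lambda>i. x$i) xs) \<and> incr x = map (\<lambda>i. x$i) xs"
proof -
  obtain ys :: "'n list" where ys: "set ys = UNIV" "distinct ys" using finite_distinct_list[of "UNIV::'n set"] by auto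
  define xs where "xs = sort_key (\<lambda>i. x$i) ys"
  have "image_mset (\<lambda>i. x $ i) (mset_set UNIV) = mset (map (\<lambda>i. x$i) ys)"
    using ys by (metis mset_map mset_set_set)
  then have "incr x = sorted_list_of_multiset (mset (map (\<lambda>i. x$i) ys))" by (simp add: incr_def)
  then have "incr x = sort (map (\<lambda>i. x$i) ys)" by (simp only: sorted_list_of_multiset_mset)
  also have "\<dots> = map (\<lambda>i. x$i) xs"
    by (rule properties_for_sort) (simp_all add: xs_def)
  finally show ?thesis using ys by (intro exI[of _ xs]) (simp add: xs_def)
qed

lemma incr_length: "length (incr (x::real^'n::finite)) = CARD('n)"
  using incr_perm[of x] by (metis distinct_card length_map)

lemma incr_sum: "sum_list (incr (x::real^'n::finite)) = (\<Sum>i\<in>UNIV. x$i)"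
  using incr_perm[of x] by (metis sum_list_distinct_conv_sum_set)

lemma incr_sort: "sort (incr (x::real^'n::finite)) = incr x"
  using incr_perm[of x] by (metis sorted_sort_id)

lemma incr_take:
  fixes x :: "real^'n::finite" and c :: "'n \<Rightarrow> real"
  assumes "k \<le> CARD('n)"
  shows "\<exists>K. card K = k \<and> sum_list (take k (incr x)) = (\<Sum>i\<in>K. x$i)"
    "(\<forall>j. 0 \<le> c j \<and> c j \<le> 1) \<Longrightarrow> (\<Sum>j\<in>UNIV. c j) = real k \<Longrightarrow> (\<Sum>j\<in>UNIV. c j * x$j) \<ge> sum_list (take k (incr x))"
proof -
  obtain xs where xs: "distinct xs" "set xs = UNIV" "sorted (map (\<lambda>i. x$i) xs)" "incr x = map (\<lambda>i. x$i) xs"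
    using incr_perm[of x] by blast
  have len: "length xs = CARD('n)" using xs by (metis distinct_card)
  define K0 where "K0 = set (take k xs)"
  have cardK0: "card K0 = k" using xs(1) assms len by (simp add: K0_def distinct_card)
  have sumK0: "sum_list (take k (incr x)) = (\<Sum>i\<in>K0. x$i)"
    using xs by (simp add: K0_def take_map sum_list_distinct_conv_sum_set)
  show "\<exists>K. card K = k \<and> sum_list (take k (incr x)) = (\<Sum>i\<in>K. x$i)" using cardK0 sumK0 by blast
  assume c: "\<forall>j. 0 \<le> c j \<and> c j \<le> 1" and csum: "(\<Sum>j\<in>UNIV. c j) = real k"
  have npos: "CARD('n) > 0" by simp
  define t where "t = x $ (xs ! (k - 1))"
  have smono: "m1 \<le> m2 \<Longrightarrow> m2 < CARD('n) \<Longrightarrow> x $ (xs ! m1) \<le> x $ (xs ! m2)" for m1 m2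
    using sorted_nth_mono[OF xs(3), of m1 m2] len by simp
  have tm: "(c j - (if j \<in> K0 then 1 else 0)) * (x$j - t) \<ge> 0" for j
  proof -
    obtain m where m: "m < CARD('n)" "xs ! m = j" using xs(2) len by (metis UNIV_I in_set_conv_nth)
    have inK: "j \<in> K0 \<longleftrightarrow> m < k"
      using m xs(1) len by (auto simp: K0_def in_set_conv_nth nth_eq_iff_index_eq)
    show ?thesis
    proof (cases "m < k")
      case True
      then have "x$j \<le> t" using smono[of m "k - 1"] m assms by (simp add: t_def)
      then show ?thesis using inK True c by (simp add: mult_nonpos_nonpos)
    next
      case False
      then have "x$j \<ge> t" using smono[of "k - 1" m] m by (simp add: t_def)
      then show ?thesis using inK False c by simp
    qed
  qed
  have "(\<Sum>j\<in>UNIV. (if j \<in> K0 then 1 else 0::real)) = real k" using cardK0 by (simp add: sum.If_cases)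
  then have "(\<Sum>j\<in>UNIV. (c j - (if j \<in> K0 then 1 else 0)) * t) = 0"
    using csum by (simp add: sum_subtractf sum_distrib_right[symmetric])
  moreover have "(\<Sum>j\<in>UNIV. (c j - (if j \<in> K0 then 1 else 0)) * x$j) \<ge> (\<Sum>j\<in>UNIV. (c j - (if j \<in> K0 then 1 else 0)) * t)"
    using tm by (intro sum_mono) (simp add: algebra_simps)
  moreover have "(\<Sum>j\<in>UNIV. (c j - (if j \<in> K0 then 1 else 0)) * x$j) = (\<Sum>j\<in>UNIV. c j * x$j) - (\<Sum>i\<in>K0. x$i)"
    by (simp add: left_diff_distrib sum_subtractf if_distrib[of "\<lambda>z. z * _"] sum.If_cases)
  ultimately show "(\<Sum>j\<in>UNIV. c j * x$j) \<ge> sum_list (take k (incr x))" using sumK0 by linarith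
qed

lemma ds_major:
  fixes a d :: "real^'n::finite" and w :: "'n \<Rightarrow> 'n \<Rightarrow> real"
  assumes w0: "\<forall>i j. w i j \<ge> 0" and rows: "\<forall>i. (\<Sum>j\<in>UNIV. w i j) = 1" and cols: "\<forall>j. (\<Sum>i\<in>UNIV. w i j) = 1"
    and ad: "\<forall>i. a$i = (\<Sum>j\<in>UNIV. w i j * d$j)"
  shows "majorized (incr a) (incr d)"
  unfolding majorized_def
proof (intro conjI allI impI)
  show "length (incr a) = length (incr d)" by (simp add: incr_length)
  show "sum_list (incr a) = sum_list (incr d)"
    using cols by (simp add: incr_sum ad sum_distrib_right[symmetric] sum.swap[of _ UNIV UNIV] mult.commute[of "w _ _"] sum_distrib_left[symmetric])
  fix k assume k: "k \<le> length (incr a)"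
  then have kn: "k \<le> CARD('n)" by (simp add: incr_length)
  obtain K where K: "card K = k" "sum_list (take k (incr a)) = (\<Sum>i\<in>K. a$i)" using incr_take(1)[OF kn, of a] by blast
  define c where "c j = (\<Sum>i\<in>K. w i j)" for j
  have "c j \<le> 1" for j
  proof -
    have "c j \<le> (\<Sum>i\<in>UNIV. w i j)" unfolding c_def by (rule sum_mono2) (use w0 in auto)
    then show ?thesis using cols by simp
  qed
  moreover have "c j \<ge> 0" for j using w0 by (simp add: c_def sum_nonneg)
  moreover have "(\<Sum>j\<in>UNIV. c j) = real k"
    using rows K(1) by (simp add: c_def sum.swap[of _ K UNIV])
  ultimately have "(\<Sum>j\<in>UNIV. c j * d$j) \<ge> sum_list (take k (incr d))"
    using incr_take(2)[OF kn] by blast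
  moreover have "(\<Sum>j\<in>UNIV. c j * d$j) = (\<Sum>i\<in>K. a$i)"
    by (simp add: c_def ad sum_distrib_right sum.swap[of _ K UNIV])
  ultimately show "sum_list (take k (sort (incr a))) \<ge> sum_list (take k (sort (incr d)))"
    using K by (simp add: incr_sort)
qed

lemma mtm_entry: "(transpose X ** X) $ p $ q = column p X \<bullet> column q (X::real^'a^'a)"
  by (simp add: matrix_matrix_mult_def transpose_def inner_vec_def column_def mult_ac)

lemma sum_delta_mult2[simp]:
  "(\<Sum>i\<in>(UNIV::'a::finite set). (f i::real) * (if i = j then c else 0)) = f j * c"
proof -
  have "\<And>i. f i * (if i = j then c else 0) = (if i = j then f i * c else 0)" by auto
  then show ?thesis by (simp add: sum.delta)
qed

lemma JS_entry: "(J_mat ** S) $ Inl i $ q = S $ Inr i $ q" "(S ** (J_mat::'n::finite dmat)) $ p $ Inr j = S $ p $ Inl j"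
  "(S ** (J_mat::'n::finite dmat)) $ p $ Inl j = - S $ p $ Inr j"
  by (simp_all add: matrix_matrix_mult_def sum_UNIV_plus J_entry)

lemma orthosymp_struct:
  fixes S :: "'n::finite dmat"
  assumes "orthosymplectic S"
  shows "S $ Inr i $ Inl j = - S $ Inl i $ Inr j" "S $ Inr i $ Inr j = S $ Inl i $ Inl j"
    "S ** transpose S = mat 1" "transpose S ** S = mat 1"
proof -
  have sy: "transpose S ** J_mat ** S = J_mat" and o: "transpose S ** S = mat 1"
    using assms by (auto simp: orthosymplectic_def symplectic_def orthogonal_matrix)
  have o2: "S ** transpose S = mat 1" using o matrix_left_right_inverse by blast
  have "S ** (transpose S ** J_mat ** S) = S ** J_mat" using sy by simp
  then have JS: "J_mat ** S = S ** J_mat" by (simp add: matrix_mul_assoc o2)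
  show "S $ Inr i $ Inl j = - S $ Inl i $ Inr j"
    using arg_cong[OF JS, of "\<lambda>X. X $ Inl i $ Inl j"] by (simp add: JS_entry)
  show "S $ Inr i $ Inr j = S $ Inl i $ Inl j"
    using arg_cong[OF JS, of "\<lambda>X. X $ Inl i $ Inr j"] by (simp add: JS_entry)
  show "S ** transpose S = mat 1" "transpose S ** S = mat 1" using o o2 by auto
qed

context spd begin

lemma A_entry_orth:
  assumes W: "williamson A S d" and o: "S ** transpose S = mat 1"
  shows "A $ p $ q = (\<Sum>j\<in>UNIV. d$j * (S$p$Inl j * S$q$Inl j + S$p$Inr j * S$q$Inr j))"
proof -
  have D: "transpose S ** A ** S = blockdiag d" using W by (simp add: williamson_def)
  have "S ** blockdiag d ** transpose S = (S ** transpose S) ** A ** (S ** transpose S)"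
    by (simp add: D[symmetric] matrix_mul_assoc)
  then have AS: "A = transpose (transpose S) ** blockdiag d ** transpose S" using o by simp
  have "A $ p $ q = row p S \<bullet> (blockdiag d *v row q S)"
    by (subst AS) (simp only: tmm_entry column_transpose)
  also have "\<dots> = (\<Sum>j\<in>UNIV. d$j * (S$p$Inl j * S$q$Inl j + S$p$Inr j * S$q$Inr j))"
    by (simp add: inner_plus bd_mulv row_def sum.distrib[symmetric] algebra_simps)
  finally show ?thesis .
qed

lemma iii_major:
  assumes "orthosymp_diagonalizable A"
  shows "majorized (incr (Delta_w A)) (symp_eigs A) \<and> majorized (incr (Delta_h A)) (symp_eigs A)"
proof -
  obtain S d where W: "williamson A S d" and os: "orthosymplectic S"
    using assms by (auto simp: orthosymp_diagonalizable_def)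
  have E: "symp_eigs A = incr d" using symp_eigs_eq[OF W] .
  have dpos: "\<forall>j. d$j > 0" using W by (simp add: williamson_def)
  note st = orthosymp_struct[OF os]
  define w where "w i j = (S$Inl i$Inl j)^2 + (S$Inl i$Inr j)^2" for i j
  have w0: "\<forall>i j. w i j \<ge> 0" by (simp add: w_def)
  have rows: "\<forall>i. (\<Sum>j\<in>UNIV. w i j) = 1"
  proof
    fix i
    have "(S ** transpose S) $ Inl i $ Inl i = 1" using st(3) by (simp add: mat_def)
    then show "(\<Sum>j\<in>UNIV. w i j) = 1"
      by (simp add: mmt_entry inner_plus row_def w_def power2_eq_square sum.distrib)
  qed
  have cols: "\<forall>j. (\<Sum>i\<in>UNIV. w i j) = 1"
  proof
    fix j
    have "(transpose S ** S) $ Inl j $ Inl j = 1" using st(4) by (simp add: mat_def)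
    then show "(\<Sum>i\<in>UNIV. w i j) = 1"
      by (simp add: mtm_entry inner_plus column_def w_def power2_eq_square sum.distrib st(1))
  qed
  have a11: "Delta11 A $ i = (\<Sum>j\<in>UNIV. w i j * d$j)" for i
    by (simp add: Delta11_def A_entry_orth[OF W st(3)] w_def power2_eq_square algebra_simps)
  have a22: "Delta22 A $ i = Delta11 A $ i" for i
    by (simp add: Delta11_def Delta22_def A_entry_orth[OF W st(3)] st(1,2) algebra_simps)
  have a12: "Delta12 A $ i = 0" for i
    by (simp add: Delta12_def A_entry_orth[OF W st(3)] st(1,2) algebra_simps)
  have a11pos: "Delta11 A $ i \<ge> 0" for i
    using dpos w0 by (simp add: a11 sum_nonneg less_imp_le)
  have ew: "Delta_w A = Delta11 A" using a11pos
    by (simp add: Delta_w_def a22 vec_eq_iff)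
  have eh: "Delta_h A = Delta11 A" using a11pos
    by (simp add: Delta_h_def a22 a12 vec_eq_iff)
  have "majorized (incr (Delta11 A)) (incr d)"
    by (rule ds_major[OF w0 rows cols]) (simp add: a11)
  then show ?thesis using E ew eh by simp
qed

end

lemma rms_ge: "sqrt ((a^2 + c^2) / 2) \<ge> (a + c) / (2::real)"
proof (cases "a + c \<le> 0")
  case True
  have "0 \<le> sqrt ((a^2 + c^2) / 2)" by simp
  moreover have "(a + c) / 2 \<le> 0" using True by simp
  ultimately show ?thesis by linarith
next
  case False
  have e: "(a^2 + c^2) / 2 - ((a + c) / 2)^2 = ((a - c) / 2)^2"
    by (simp add: power2_eq_square field_simps)
  have "((a + c) / 2)^2 \<le> (a^2 + c^2) / 2"
    using e zero_le_power2[of "(a - c) / 2"] by linarith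
  then show ?thesis by (rule real_le_rsqrt)
qed

context spd begin

lemma iii_of_sum:
  assumes "(\<Sum>i\<in>UNIV. Delta_w A $ i) \<le> sum_list (symp_eigs A)"
  shows "orthosymp_diagonalizable A"
proof -
  obtain S d where W: "williamson A S d" using williamson_ex by blast
  have E: "symp_eigs A = incr d" using symp_eigs_eq[OF W] .
  have tr: "(\<Sum>p\<in>UNIV. A$p$p) = (\<Sum>i\<in>UNIV. Delta11 A $ i + Delta22 A $ i)"
    by (simp add: sum_UNIV_plus Delta11_def Delta22_def sum.distrib)
  have "(\<Sum>i\<in>UNIV. (Delta11 A $ i + Delta22 A $ i) / 2) \<le> (\<Sum>i\<in>UNIV. Delta_w A $ i)"
    by (intro sum_mono) (simp only: Delta_w_def vec_lambda_beta rms_ge)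
  then have "(\<Sum>p\<in>UNIV. A$p$p) \<le> 2 * (\<Sum>j\<in>UNIV. d$j)"
    using assms tr by (simp add: E incr_sum sum_divide_distrib[symmetric])
  then have "(\<Sum>p\<in>UNIV. A$p$p) = 2 * (\<Sum>j\<in>UNIV. d$j)" using trace_ge[OF W] by simp
  then have "orthogonal_matrix S" using trace_eq_orth[OF W] by simp
  then show ?thesis using W by (auto simp: orthosymp_diagonalizable_def orthosymplectic_def williamson_def)
qed

lemma main:
  shows "majorized (incr (Delta_w A)) (symp_eigs A) \<longleftrightarrow> orthosymp_diagonalizable A"
    "majorized (incr (Delta_h A)) (symp_eigs A) \<longleftrightarrow> orthosymp_diagonalizable A"
proof -
  have wh: "(\<Sum>i\<in>UNIV. Delta_w A $ i) \<le> (\<Sum>i\<in>UNIV. Delta_h A $ i)"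
    by (intro sum_mono) (simp add: Delta_w_def Delta_h_def)
  show "majorized (incr (Delta_w A)) (symp_eigs A) \<longleftrightarrow> orthosymp_diagonalizable A"
  proof
    assume "majorized (incr (Delta_w A)) (symp_eigs A)"
    then have "sum_list (incr (Delta_w A)) = sum_list (symp_eigs A)" by (simp add: majorized_def)
    then show "orthosymp_diagonalizable A" by (intro iii_of_sum) (simp add: incr_sum)
  qed (use iii_major in blast)
  show "majorized (incr (Delta_h A)) (symp_eigs A) \<longleftrightarrow> orthosymp_diagonalizable A"
  proof
    assume "majorized (incr (Delta_h A)) (symp_eigs A)"
    then have "sum_list (incr (Delta_h A)) = sum_list (symp_eigs A)" by (simp add: majorized_def)
    then show "orthosymp_diagonalizable A" using wh by (intro iii_of_sum) (simp add: incr_sum)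
  qed (use iii_major in blast)
qed

end

theorem theorem1p2:
  fixes A :: "real ^ ('n::finite + 'n) ^ ('n + 'n)"
  assumes "sym_posdef A"
  shows "(majorized (incr (Delta_w A)) (symp_eigs A) \<longleftrightarrow> majorized (incr (Delta_h A)) (symp_eigs A))
       \<and> (majorized (incr (Delta_h A)) (symp_eigs A) \<longleftrightarrow> orthosymp_diagonalizable A)"
proof -
  interpret spd A by unfold_locales (rule assms)
  show ?thesis using main by blast
qed

end
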